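(* Let $f$ be a real-valued function of two arguments that is monotonic (non-decreasing) in its first argument and anti-monotonic (non-increasing) in its second argument. Let $x$ and $y$ be variables, each hosted on a single process of a computation, such that either both $x$ and $y$ are monotonically non-decreasing or both are monotonically non-increasing. Then, for every constant $c$ and every $\mathtt{relop} \in \{<, \leq, >, \geq\}$, the predicate $f(x,y)\ \mathtt{relop}\ c$ is regular.
   Context: A computation is a directed graph $\langle E, \rightarrow\rangle$ whose vertices (events) are partitioned among processes $p_1,\dots,p_n$; the events of each process are totally ordered in real time, each process $p_i$ has a fictitious initial event $\bot_i$ (first) and final event $\top_i$ (last), the path relation of the graph contains Lamport's happened-before relation, all initial events lie in one strongly connected component and all final events lie in one strongly connected component. A subset $C \subseteq E$ is a consistent cut if for every edge $(u,v)$, $v \in C$ implies $u \in C$; $\emptyset$ and $E$ are the trivial consistent cuts. A (global) predicate is a boolean function of process variables, evaluated at a non-trivial consistent cut $C$ using the values of the variables immediately after all events in $C$ have been executed; for a variable $x$ hosted on a process, $x(C)$ is its value after the last event of that process in $C$. A variable is monotonically non-decreasing (resp. non-increasing) if its value never decreases (resp. increases) along the events of its process. A predicate $b$ is regular if whenever consistent cuts $C_1$ and $C_2$ satisfy $b$, so do $C_1 \cap C_2$ and $C_1 \cup C_2$. *)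

theory Defs
  imports Complex_Main
begin

text \<open>A computation: a finite set of events E, partitioned among the processes P
(via proc), a directed edge relation on E, the real-time order of events on
each process (before), a message relation msg (send/receive), fictitious
initial and final events ini/fin per process.\<close>

definition happened_before ::
  "('e \<Rightarrow> 'e \<Rightarrow> bool) \<Rightarrow> ('e \<Rightarrow> 'e \<Rightarrow> bool) \<Rightarrow> 'e \<Rightarrow> 'e \<Rightarrow> bool" where
  "happened_before before msg = (\<lambda>u v. before u v \<or> msg u v)\<^sup>+\<^sup>+"

definition computation ::
  "'e set \<Rightarrow> ('e \<Rightarrow> 'e \<Rightarrow> bool) \<Rightarrow> 'p set \<Rightarrow> ('e \<Rightarrow> 'p) \<Rightarrow>
   ('e \<Rightarrow> 'e \<Rightarrow> bool) \<Rightarrow> ('e \<Rightarrow> 'e \<Rightarrow> bool) \<Rightarrow> ('p \<Rightarrow> 'e) \<Rightarrow> ('p \<Rightarrow> 'e) \<Rightarrow> bool" where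
  "computation E edge P proc before msg ini fin \<longleftrightarrow>
     finite E \<and> finite P \<and> P \<noteq> {} \<and>
     (\<forall>u v. edge u v \<longrightarrow> u \<in> E \<and> v \<in> E) \<and>
     (\<forall>e\<in>E. proc e \<in> P) \<and>
     \<comment> \<open>events of each process are totally ordered in real time\<close>
     (\<forall>u v. before u v \<longrightarrow> u \<in> E \<and> v \<in> E \<and> proc u = proc v) \<and>
     (\<forall>u\<in>E. \<not> before u u) \<and>
     (\<forall>u v w. before u v \<longrightarrow> before v w \<longrightarrow> before u w) \<and>
     (\<forall>u\<in>E. \<forall>v\<in>E. proc u = proc v \<longrightarrow> u = v \<or> before u v \<or> before v u) \<and>
     \<comment> \<open>messages are between events\<close>
     (\<forall>u v. msg u v \<longrightarrow> u \<in> E \<and> v \<in> E) \<and>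
     \<comment> \<open>initial and final events\<close>
     (\<forall>i\<in>P. ini i \<in> E \<and> proc (ini i) = i \<and> fin i \<in> E \<and> proc (fin i) = i \<and> ini i \<noteq> fin i \<and>
        (\<forall>e\<in>E. proc e = i \<longrightarrow> e \<noteq> ini i \<longrightarrow> before (ini i) e) \<and>
        (\<forall>e\<in>E. proc e = i \<longrightarrow> e \<noteq> fin i \<longrightarrow> before e (fin i))) \<and>
     \<comment> \<open>path relation contains happened-before\<close>
     (\<forall>u v. happened_before before msg u v \<longrightarrow> edge\<^sup>+\<^sup>+ u v) \<and>
     \<comment> \<open>initial events in one SCC, final events in one SCC\<close>
     (\<forall>i\<in>P. \<forall>j\<in>P. edge\<^sup>*\<^sup>* (ini i) (ini j)) \<and>
     (\<forall>i\<in>P. \<forall>j\<in>P. edge\<^sup>*\<^sup>* (fin i) (fin j))"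

definition consistent_cut :: "'e set \<Rightarrow> ('e \<Rightarrow> 'e \<Rightarrow> bool) \<Rightarrow> 'e set \<Rightarrow> bool" where
  "consistent_cut E edge C \<longleftrightarrow> C \<subseteq> E \<and> (\<forall>u v. edge u v \<longrightarrow> v \<in> C \<longrightarrow> u \<in> C)"

definition nontrivial_cut :: "'e set \<Rightarrow> ('e \<Rightarrow> 'e \<Rightarrow> bool) \<Rightarrow> 'e set \<Rightarrow> bool" where
  "nontrivial_cut E edge C \<longleftrightarrow> consistent_cut E edge C \<and> C \<noteq> {} \<and> C \<noteq> E"

definition last_event :: "('e \<Rightarrow> 'p) \<Rightarrow> ('e \<Rightarrow> 'e \<Rightarrow> bool) \<Rightarrow> 'p \<Rightarrow> 'e set \<Rightarrow> 'e" where
  "last_event proc before p C =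
     (THE e. e \<in> C \<and> proc e = p \<and> (\<forall>f\<in>C. proc f = p \<longrightarrow> f = e \<or> before f e))"

text \<open>Value of a variable hosted on process p, whose value after event e is val e,
at cut C.\<close>
definition var_at :: "('e \<Rightarrow> 'p) \<Rightarrow> ('e \<Rightarrow> 'e \<Rightarrow> bool) \<Rightarrow> 'p \<Rightarrow> ('e \<Rightarrow> real) \<Rightarrow> 'e set \<Rightarrow> real" where
  "var_at proc before p val C = val (last_event proc before p C)"

definition mono_nondecr_var :: "'e set \<Rightarrow> ('e \<Rightarrow> 'p) \<Rightarrow> ('e \<Rightarrow> 'e \<Rightarrow> bool) \<Rightarrow> 'p \<Rightarrow> ('e \<Rightarrow> real) \<Rightarrow> bool" where
  "mono_nondecr_var E proc before p val \<longleftrightarrow>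
     (\<forall>e\<in>E. \<forall>f\<in>E. proc e = p \<longrightarrow> proc f = p \<longrightarrow> before e f \<longrightarrow> val e \<le> val f)"

definition mono_nonincr_var :: "'e set \<Rightarrow> ('e \<Rightarrow> 'p) \<Rightarrow> ('e \<Rightarrow> 'e \<Rightarrow> bool) \<Rightarrow> 'p \<Rightarrow> ('e \<Rightarrow> real) \<Rightarrow> bool" where
  "mono_nonincr_var E proc before p val \<longleftrightarrow>
     (\<forall>e\<in>E. \<forall>f\<in>E. proc e = p \<longrightarrow> proc f = p \<longrightarrow> before e f \<longrightarrow> val f \<le> val e)"

definition regular_pred :: "'e set \<Rightarrow> ('e \<Rightarrow> 'e \<Rightarrow> bool) \<Rightarrow> ('e set \<Rightarrow> bool) \<Rightarrow> bool" where
  "regular_pred E edge b \<longleftrightarrow>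
     (\<forall>C1 C2. nontrivial_cut E edge C1 \<longrightarrow> nontrivial_cut E edge C2 \<longrightarrow> b C1 \<longrightarrow> b C2 \<longrightarrow>
        b (C1 \<inter> C2) \<and> b (C1 \<union> C2))"

end

theory Submission
  imports Defs
begin

lemma arith_between:
  fixes f :: "real \<Rightarrow> real \<Rightarrow> real"
  assumes f_mono: "\<And>a a' b. a \<le> a' \<Longrightarrow> f a b \<le> f a' b"
    and f_antimono: "\<And>a b b'. b \<le> b' \<Longrightarrow> f a b' \<le> f a b"
    and g: "g = min \<or> g = max"
  shows "min (f xa ya) (f xb yb) \<le> f (g xa xb) (g ya yb) \<and> f (g xa xb) (g ya yb) \<le> max (f xa ya) (f xb yb)"
proof -
  have A: "f xa ya \<le> f xa yb \<and> f xa yb \<le> f xb yb" if "xa \<le> xb" "yb \<le> ya"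
    using that f_mono f_antimono by blast
  have B: "f xb yb \<le> f xb ya \<and> f xb ya \<le> f xa ya" if "xb \<le> xa" "ya \<le> yb"
    using that f_mono f_antimono by blast
  have C: "f xb yb \<le> f xa yb \<and> f xa yb \<le> f xa ya" if "xb \<le> xa" "ya \<le> yb"
    using that f_mono f_antimono by blast
  have D: "f xa ya \<le> f xb ya \<and> f xb ya \<le> f xb yb" if "xa \<le> xb" "yb \<le> ya"
    using that f_mono f_antimono by blast
  show ?thesis
    using g A B C D
    by (cases "xa \<le> xb"; cases "ya \<le> yb") (auto simp: min_def max_def)
qed

lemma relop_between:
  fixes F1 F2 F c :: real
  assumes "relop \<in> {(<), (\<le>), (>), (\<ge>)}" "relop F1 c" "relop F2 c"
    "min F1 F2 \<le> F" "F \<le> max F1 F2"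
  shows "relop F c"
  using assms by (auto simp: min_def max_def split: if_splits)

lemma comp_facts:
  assumes "computation E edge P proc before msg ini fin"
  shows "finite E" "\<forall>u\<in>E. \<not> before u u"
    "\<forall>u v w. before u v \<longrightarrow> before v w \<longrightarrow> before u w"
    "\<forall>u\<in>E. \<forall>v\<in>E. proc u = proc v \<longrightarrow> u = v \<or> before u v \<or> before v u"
    "\<forall>i\<in>P. ini i \<in> E \<and> proc (ini i) = i"
proof -
  note c = assms[unfolded computation_def]
  show "finite E" using c by (elim conjE)
  show "\<forall>u\<in>E. \<not> before u u" using c by (elim conjE)
  show "\<forall>u v w. before u v \<longrightarrow> before v w \<longrightarrow> before u w" using c by (elim conjE)
  show "\<forall>u\<in>E. \<forall>v\<in>E. proc u = proc v \<longrightarrow> u = v \<or> before u v \<or> before v u" using c by (elim conjE)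
  have "\<forall>i\<in>P. ini i \<in> E \<and> proc (ini i) = i \<and> fin i \<in> E \<and> proc (fin i) = i \<and> ini i \<noteq> fin i \<and>
        (\<forall>e\<in>E. proc e = i \<longrightarrow> e \<noteq> ini i \<longrightarrow> before (ini i) e) \<and>
        (\<forall>e\<in>E. proc e = i \<longrightarrow> e \<noteq> fin i \<longrightarrow> before e (fin i))" using c by (elim conjE)
  then show "\<forall>i\<in>P. ini i \<in> E \<and> proc (ini i) = i" by blast
qed

lemma down_closed:
  assumes "consistent_cut E edge C" "edge\<^sup>+\<^sup>+ u v" "v \<in> C"
  shows "u \<in> C"
  using assms(2,3)
proof (induction rule: tranclp.induct)
  case (r_into_trancl a b) then show ?case using assms(1) unfolding consistent_cut_def by blast
next
  case (trancl_into_trancl a b c) then show ?case using assms(1) unfolding consistent_cut_def by blast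
qed

lemma before_in:
  assumes "computation E edge P proc before msg ini fin" "consistent_cut E edge C"
    "before u v" "v \<in> C"
  shows "u \<in> C"
proof -
  have "happened_before before msg u v" unfolding happened_before_def
    using assms(3) by (simp add: tranclp.r_into_trancl)
  moreover have "\<forall>u v. happened_before before msg u v \<longrightarrow> edge\<^sup>+\<^sup>+ u v"
    using assms(1) unfolding computation_def by (elim conjE)
  ultimately have "edge\<^sup>+\<^sup>+ u v" by blast
  then show ?thesis using down_closed assms by metis
qed

lemma ini_in:
  assumes comp: "computation E edge P proc before msg ini fin" and nt: "nontrivial_cut E edge C"
    and p: "p \<in> P"
  shows "ini p \<in> C"
proof -
  have cc: "consistent_cut E edge C" and ne: "C \<noteq> {}" and sub: "C \<subseteq> E"
    using nt unfolding nontrivial_cut_def consistent_cut_def by auto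
  obtain e where e: "e \<in> C" using ne by blast
  then have eE: "e \<in> E" using sub by blast
  define i where "i = proc e"
  have procP: "\<forall>e\<in>E. proc e \<in> P" using comp unfolding computation_def by (elim conjE)
  have iP: "i \<in> P" using procP eE unfolding i_def by blast
  have inis: "\<forall>i\<in>P. ini i \<in> E \<and> proc (ini i) = i \<and> fin i \<in> E \<and> proc (fin i) = i \<and> ini i \<noteq> fin i \<and>
        (\<forall>e\<in>E. proc e = i \<longrightarrow> e \<noteq> ini i \<longrightarrow> before (ini i) e) \<and>
        (\<forall>e\<in>E. proc e = i \<longrightarrow> e \<noteq> fin i \<longrightarrow> before e (fin i))"
    using comp unfolding computation_def by (elim conjE)
  have scc: "\<forall>i\<in>P. \<forall>j\<in>P. edge\<^sup>*\<^sup>* (ini i) (ini j)"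
    using comp unfolding computation_def by (elim conjE)
  have "e = ini i \<or> before (ini i) e"
  proof -
    have "\<forall>e\<in>E. proc e = i \<longrightarrow> e \<noteq> ini i \<longrightarrow> before (ini i) e" using inis iP by blast
    then show ?thesis using eE i_def by blast
  qed
  then have ii: "ini i \<in> C" using e before_in[OF comp cc] by blast
  have st: "edge\<^sup>*\<^sup>* (ini p) (ini i)" using scc iP p by blast
  show ?thesis
  proof (cases "ini p = ini i")
    case True then show ?thesis using ii by simp
  next
    case False
    then have "edge\<^sup>+\<^sup>+ (ini p) (ini i)" using rtranclpD[OF st] by blast
    then show ?thesis using ii down_closed[OF cc] by blast
  qed
qed

lemma last_unique:
  assumes comp: "computation E edge P proc before msg ini fin" and sub: "C \<subseteq> E"
    and e: "e \<in> C" "proc e = p" and mx: "\<forall>f\<in>C. proc f = p \<longrightarrow> f = e \<or> before f e"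
  shows "last_event proc before p C = e"
  unfolding last_event_def
proof (rule the_equality)
  show "e \<in> C \<and> proc e = p \<and> (\<forall>f\<in>C. proc f = p \<longrightarrow> f = e \<or> before f e)" using e mx by blast
next
  fix e' assume h: "e' \<in> C \<and> proc e' = p \<and> (\<forall>f\<in>C. proc f = p \<longrightarrow> f = e' \<or> before f e')"
  note irr = comp_facts(2)[OF comp] and tr = comp_facts(3)[OF comp]
  have "e' = e \<or> before e' e" using mx h by blast
  moreover have "e = e' \<or> before e e'" using h e by blast
  ultimately show "e' = e" using irr tr e sub by blast
qed

lemma last_exists:
  assumes comp: "computation E edge P proc before msg ini fin"
    and fin: "finite S" and ne: "S \<noteq> {}" and sub: "S \<subseteq> E" and pr: "\<forall>e\<in>S. proc e = p"
  shows "\<exists>e\<in>S. \<forall>f\<in>S. f = e \<or> before f e"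
  using fin ne sub pr
proof (induction S rule: finite_ne_induct)
  case (singleton x) then show ?case by blast
next
  case (insert x F)
  then have IH: "\<exists>e\<in>F. \<forall>f\<in>F. f = e \<or> before f e" by blast
  then obtain m where m: "m \<in> F" "\<forall>f\<in>F. f = m \<or> before f m" by blast
  note tot = comp_facts(4)[OF comp] and tr = comp_facts(3)[OF comp]
  have xE: "x \<in> E" and mE: "m \<in> E" using insert.prems m(1) by blast+
  have pp: "proc x = proc m" using insert.prems m(1) by simp
  have o: "x = m \<or> before x m \<or> before m x" using tot xE mE pp by blast
  show ?case
  proof (cases "before m x")
    case True
    have "\<forall>f\<in>insert x F. f = x \<or> before f x"
    proof
      fix f assume "f \<in> insert x F"
      then show "f = x \<or> before f x" using m(2) True tr by (metis insertE)
    qed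
    then show ?thesis by blast
  next
    case False
    then have "x = m \<or> before x m" using o by blast
    then have "\<forall>f\<in>insert x F. f = m \<or> before f m" using m(2) by blast
    then show ?thesis using m(1) by blast
  qed
qed

lemma last_props:
  assumes comp: "computation E edge P proc before msg ini fin" and nt: "nontrivial_cut E edge C"
    and p: "p \<in> P"
  shows "last_event proc before p C \<in> C \<and> proc (last_event proc before p C) = p \<and>
    (\<forall>f\<in>C. proc f = p \<longrightarrow> f = last_event proc before p C \<or> before f (last_event proc before p C))"
proof -
  have sub: "C \<subseteq> E" using nt unfolding nontrivial_cut_def consistent_cut_def by auto
  note finE = comp_facts(1)[OF comp]
  let ?S = "{e\<in>C. proc e = p}"
  have "ini p \<in> ?S" using ini_in[OF comp nt p] comp_facts(5)[OF comp] p by auto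
  then obtain e where e: "e \<in> ?S" "\<forall>f\<in>?S. f = e \<or> before f e"
  proof -
    have sS: "?S \<subseteq> E" using sub by blast
    have f: "finite ?S" using finite_subset[OF sS finE] .
    have ne: "?S \<noteq> {}" using \<open>ini p \<in> ?S\<close> by blast
    have "\<forall>e\<in>?S. proc e = p" by blast
    from last_exists[OF comp f ne sS this] show ?thesis using that by blast
  qed
  have e1: "e \<in> C" "proc e = p" and e2: "\<forall>f\<in>C. proc f = p \<longrightarrow> f = e \<or> before f e" using e by auto
  have "last_event proc before p C = e" using last_unique[OF comp sub e1 e2] .
  then show ?thesis using e by auto
qed

lemma pick:
  assumes comp: "computation E edge P proc before msg ini fin"
    and n1: "nontrivial_cut E edge C1" and n2: "nontrivial_cut E edge C2" and p: "p \<in> P"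
  shows "\<exists>a b. {a, b} = {last_event proc before p C1, last_event proc before p C2} \<and>
     last_event proc before p (C1 \<inter> C2) = a \<and> last_event proc before p (C1 \<union> C2) = b \<and>
     (a = b \<or> before a b)"
proof -
  define e1 where "e1 = last_event proc before p C1"
  define e2 where "e2 = last_event proc before p C2"
  have L1: "e1 \<in> C1 \<and> proc e1 = p \<and> (\<forall>f\<in>C1. proc f = p \<longrightarrow> f = e1 \<or> before f e1)"
    using last_props[OF comp n1 p] e1_def by simp
  have L2: "e2 \<in> C2 \<and> proc e2 = p \<and> (\<forall>f\<in>C2. proc f = p \<longrightarrow> f = e2 \<or> before f e2)"
    using last_props[OF comp n2 p] e2_def by simp
  have cc1: "consistent_cut E edge C1" and cc2: "consistent_cut E edge C2"
    and s1: "C1 \<subseteq> E" and s2: "C2 \<subseteq> E"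
    using n1 n2 unfolding nontrivial_cut_def consistent_cut_def by auto
  note tot = comp_facts(4)[OF comp] and tr = comp_facts(3)[OF comp]
  have key: "\<exists>a b. {a, b} = {e1, e2} \<and>
     last_event proc before p (C1 \<inter> C2) = a \<and> last_event proc before p (C1 \<union> C2) = b \<and>
     (a = b \<or> before a b)"
    if L1: "e1 \<in> C1 \<and> proc e1 = p \<and> (\<forall>f\<in>C1. proc f = p \<longrightarrow> f = e1 \<or> before f e1)"
    and L2: "e2 \<in> C2 \<and> proc e2 = p \<and> (\<forall>f\<in>C2. proc f = p \<longrightarrow> f = e2 \<or> before f e2)"
    and cc2: "consistent_cut E edge C2" and s1: "C1 \<subseteq> E" and s2: "C2 \<subseteq> E"
    and o: "e1 = e2 \<or> before e1 e2"
    for C1 C2 e1 e2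
  proof -
    have "e1 \<in> C2" using o L2 before_in[OF comp cc2] by blast
    then have "last_event proc before p (C1 \<inter> C2) = e1"
      using last_unique[OF comp, of "C1 \<inter> C2" e1 p] L1 s1 by auto
    moreover have "last_event proc before p (C1 \<union> C2) = e2"
      using last_unique[OF comp, of "C1 \<union> C2" e2 p] L1 L2 s1 s2 o tr by blast
    ultimately show ?thesis using o by blast
  qed
  have "(e1 = e2 \<or> before e1 e2) \<or> before e2 e1" using tot L1 L2 s1 s2 by blast
  then have "\<exists>a b. {a, b} = {e1, e2} \<and>
     last_event proc before p (C1 \<inter> C2) = a \<and> last_event proc before p (C1 \<union> C2) = b \<and>
     (a = b \<or> before a b)"
  proof
    assume "e1 = e2 \<or> before e1 e2"
    then show ?thesis using key[of e1 C1 e2 C2] L1 L2 cc2 s1 s2 by blast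
  next
    assume "before e2 e1 "
    then obtain a b where "{a, b} = {e2, e1}" "last_event proc before p (C2 \<inter> C1) = a"
      "last_event proc before p (C2 \<union> C1) = b" "a = b \<or> before a b"
      using key[of e2 C2 e1 C1] L1 L2 cc1 s1 s2 by blast
    then show ?thesis by (metis Int_commute Un_commute insert_commute)
  qed
  then show ?thesis using e1_def e2_def by simp
qed

lemma vals:
  assumes comp: "computation E edge P proc before msg ini fin"
    and n1: "nontrivial_cut E edge C1" and n2: "nontrivial_cut E edge C2" and p: "p \<in> P"
  shows "(mono_nondecr_var E proc before p val \<longrightarrow>
      var_at proc before p val (C1 \<inter> C2) = min (var_at proc before p val C1) (var_at proc before p val C2) \<and>
      var_at proc before p val (C1 \<union> C2) = max (var_at proc before p val C1) (var_at proc before p val C2)) \<and>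
    (mono_nonincr_var E proc before p val \<longrightarrow>
      var_at proc before p val (C1 \<inter> C2) = max (var_at proc before p val C1) (var_at proc before p val C2) \<and>
      var_at proc before p val (C1 \<union> C2) = min (var_at proc before p val C1) (var_at proc before p val C2))"
proof -
  obtain a b where ab: "{a, b} = {last_event proc before p C1, last_event proc before p C2}"
     "last_event proc before p (C1 \<inter> C2) = a" "last_event proc before p (C1 \<union> C2) = b"
     "a = b \<or> before a b"
    using pick[OF comp n1 n2 p] by blast
  have L1: "last_event proc before p C1 \<in> C1 \<and> proc (last_event proc before p C1) = p"
    using last_props[OF comp n1 p] by simp
  have L2: "last_event proc before p C2 \<in> C2 \<and> proc (last_event proc before p C2) = p"
    using last_props[OF comp n2 p] by simp
  have s1: "C1 \<subseteq> E" and s2: "C2 \<subseteq> E"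
    using n1 n2 unfolding nontrivial_cut_def consistent_cut_def by auto
  have aE: "a \<in> E \<and> proc a = p" and bE: "b \<in> E \<and> proc b = p"
    using ab(1) L1 L2 s1 s2 by (metis doubleton_eq_iff subsetD)+
  have ab2: "(a = last_event proc before p C1 \<and> b = last_event proc before p C2) \<or>
     (a = last_event proc before p C2 \<and> b = last_event proc before p C1)"
    using ab(1) by (metis doubleton_eq_iff)
  show ?thesis
  proof (intro conjI impI)
    assume m: "mono_nondecr_var E proc before p val"
    have "val a \<le> val b" using ab(4) m aE bE unfolding mono_nondecr_var_def by auto
    then show "var_at proc before p val (C1 \<inter> C2) = min (var_at proc before p val C1) (var_at proc before p val C2)"
      "var_at proc before p val (C1 \<union> C2) = max (var_at proc before p val C1) (var_at proc before p val C2)"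
      using ab ab2 unfolding var_at_def by auto
  next
    assume m: "mono_nonincr_var E proc before p val"
    have "val b \<le> val a" using ab(4) m aE bE unfolding mono_nonincr_var_def by auto
    then show "var_at proc before p val (C1 \<inter> C2) = max (var_at proc before p val C1) (var_at proc before p val C2)"
      "var_at proc before p val (C1 \<union> C2) = min (var_at proc before p val C1) (var_at proc before p val C2)"
      using ab ab2 unfolding var_at_def by auto
  qed
qed

theorem theorem1:
  fixes E :: "'e set" and edge before msg :: "'e \<Rightarrow> 'e \<Rightarrow> bool"
    and P :: "'p set" and proc :: "'e \<Rightarrow> 'p" and ini fin :: "'p \<Rightarrow> 'e"
    and f :: "real \<Rightarrow> real \<Rightarrow> real"
    and px py :: 'p and xv yv :: "'e \<Rightarrow> real"
    and c :: real and relop :: "real \<Rightarrow> real \<Rightarrow> bool"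
  assumes comp: "computation E edge P proc before msg ini fin"
    and f_mono: "\<And>a a' b. a \<le> a' \<Longrightarrow> f a b \<le> f a' b"
    and f_antimono: "\<And>a b b'. b \<le> b' \<Longrightarrow> f a b' \<le> f a b"
    and px: "px \<in> P" and py: "py \<in> P"
    and xy_mono: "(mono_nondecr_var E proc before px xv \<and> mono_nondecr_var E proc before py yv) \<or>
                  (mono_nonincr_var E proc before px xv \<and> mono_nonincr_var E proc before py yv)"
    and relop: "relop \<in> {(<), (\<le>), (>), (\<ge>)}"
  shows "regular_pred E edge
           (\<lambda>C. relop (f (var_at proc before px xv C) (var_at proc before py yv C)) c)"
  unfolding regular_pred_def
proof (intro allI impI)
  fix C1 C2
  assume n1: "nontrivial_cut E edge C1" and n2: "nontrivial_cut E edge C2"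
    and b1: "relop (f (var_at proc before px xv C1) (var_at proc before py yv C1)) c"
    and b2: "relop (f (var_at proc before px xv C2) (var_at proc before py yv C2)) c"
  let ?x1 = "var_at proc before px xv C1" and ?x2 = "var_at proc before px xv C2"
  let ?y1 = "var_at proc before py yv C1" and ?y2 = "var_at proc before py yv C2"
  note vx = vals[OF comp n1 n2 px, of xv] and vy = vals[OF comp n1 n2 py, of yv]
  have G: "relop (f (g ?x1 ?x2) (g ?y1 ?y2)) c" if gg: "g = min \<or> g = max" for g :: "real \<Rightarrow> real \<Rightarrow> real"
  proof -
    have H: "min (f ?x1 ?y1) (f ?x2 ?y2) \<le> f (g ?x1 ?x2) (g ?y1 ?y2) \<and> f (g ?x1 ?x2) (g ?y1 ?y2) \<le> max (f ?x1 ?y1) (f ?x2 ?y2)"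
      by (rule arith_between) (use f_mono f_antimono gg in auto)
    show ?thesis using relop_between[OF relop b1 b2] H by blast
  qed
  show "relop (f (var_at proc before px xv (C1 \<inter> C2)) (var_at proc before py yv (C1 \<inter> C2))) c \<and>
        relop (f (var_at proc before px xv (C1 \<union> C2)) (var_at proc before py yv (C1 \<union> C2))) c"
    using xy_mono vx vy G[of min] G[of max] by auto
qed

end
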